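(* For all processes $P,Q$: if $\emptyset\vdash P$ and $P\rightarrow^{\star}Q$, then $Q$ is not an error.
   Context: Let $\mathcal N$ be a countable set of names. Processes are generated by $P,Q ::= 0 \mid P\mid Q \mid (\nu a)P \mid (a)P \mid \alpha.P$, where $(\nu a)P$ is name restriction (binding $a$), $(a)P$ is the authorization scope ($P$ is authorized to act on $a$; $a$ not bound), and prefixes are $\alpha ::= \overline{a}\langle b\rangle$ (output of $b$ on $a$) $\mid a(x)$ (input on $a$, binding $x$) $\mid \overline{a}\langle\!\langle b\rangle\!\rangle$ (send authorization for $b$ on $a$) $\mid a\langle\!\langle b\rangle\!\rangle$ (receive authorization for $b$ on $a$; $b$ not bound). For a name $a$, $\alpha_a$ denotes any prefix of one of these four forms with subject $a$. $(\vec a)P$ abbreviates $(a_1)\cdots(a_m)P$ (possibly empty). Free names: $\mathrm{fn}(0)=\emptyset$, $\mathrm{fn}(P\mid Q)=\mathrm{fn}(P)\cup\mathrm{fn}(Q)$, $\mathrm{fn}((\nu a)P)=\mathrm{fn}(P)\setminus\{a\}$, $\mathrm{fn}((a)P)=\{a\}\cup\mathrm{fn}(P)$, $\mathrm{fn}(\overline{a}\langle b\rangle.P)=\mathrm{fn}(\overline{a}\langle\!\langle b\rangle\!\rangle.P)=\mathrm{fn}(a\langle\!\langle b\rangle\!\rangle.P)=\{a,b\}\cup\mathrm{fn}(P)$, $\mathrm{fn}(a(x).P)=\{a\}\cup(\mathrm{fn}(P)\setminus\{x\})$. $Q\{c/x\}$ is capture-avoiding substitution. Structural congruence $\equiv$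 is the least congruence satisfying: $P\mid 0\equiv P$; $P\mid Q\equiv Q\mid P$; $(P\mid Q)\mid R\equiv P\mid(Q\mid R)$; $(\nu a)0\equiv 0$; $(\nu a)(\nu b)P\equiv(\nu b)(\nu a)P$; $P\mid(\nu a)Q\equiv(\nu a)(P\mid Q)$ if $a\notin\mathrm{fn}(P)$; $\alpha$-convertible processes are congruent; $(a)(b)P\equiv(b)(a)P$; $(a)0\equiv 0$; $(a)(P\mid Q)\equiv(a)P\mid(a)Q$; $(a)(\nu b)P\equiv(\nu b)(a)P$ if $a\neq b$. Reduction $\rightarrow$ is the least relation such that: (comm) $(\vec a_1)(b)\overline{b}\langle c\rangle.P\mid(\vec a_2)(b)b(x).Q\rightarrow(\vec a_1)(b)P\mid(\vec a_2)(b)Q\{c/x\}$; (auth) $(\vec a_1)(b)(c)\overline{b}\langle\!\langle c\rangle\!\rangle.P\mid(\vec a_2)(b)b\langle\!\langle c\rangle\!\rangle.Q\rightarrow(\vec a_1)(b)P\mid(\vec a_2)(b)(c)Q$; if $P\rightarrow Q$ then $P\mid R\rightarrow Q\mid R$, $(\nu a)P\rightarrow(\nu a)Q$ and $(a)P\rightarrow(a)Q$; and if $P\equiv P'\rightarrow Q'\equiv Q$ then $P\rightarrow Q$. $\rightarrow^{\star}$ is the reflexive–transitive closure of $\rightarrow$. Active contexts: $\mathcal C[\cdot] ::= \cdot \mid P\mid\mathcal C[\cdot] \mid (\nu a)\mathcal C[\cdot] \mid (a)\mathcal C[\cdot]$. The predicate $\mathrm{auth}(\mathcal C[\cdot],a)$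 is: $\mathit{false}$ if $\mathcal C[\cdot]=\cdot$; $\mathit{true}$ if $\mathcal C[\cdot]=(a)\mathcal C'[\cdot]$; $\mathrm{auth}(\mathcal C'[\cdot],a)$ if $\mathcal C[\cdot]$ is $(b)\mathcal C'[\cdot]$ with $a\neq b$, $P\mid\mathcal C'[\cdot]$, or $(\nu b)\mathcal C'[\cdot]$. A process $P$ is an error if $P\equiv\mathcal C[\alpha_a.Q]$ for some active context $\mathcal C[\cdot]$, name $a$, prefix $\alpha_a$ and process $Q$ such that either $\mathrm{auth}(\mathcal C[\cdot],a)=\mathit{false}$, or $\alpha_a=\overline{a}\langle\!\langle b\rangle\!\rangle$ and $\mathrm{auth}(\mathcal C[\cdot],b)=\mathit{false}$. The typing judgment $\rho\vdash P$ ($\rho$ a set of names) is the least relation closed under the rules: $\emptyset\vdash 0$; if $\rho_1\vdash P$ and $\rho_2\vdash Q$ then $\rho_1\cup\rho_2\vdash P\mid Q$; if $\rho\vdash P$ and $a\notin\rho$ then $\rho\vdash(\nu a)P$; if $\rho\vdash P$ then $\rho\setminus\{a\}\vdash(a)P$; if $\rho\vdash P$ then $\rho\cup\{a\}\vdash\overline{a}\langle b\rangle.P$; if $\rho\vdash P$ and $x\notin\rho$ then $\rho\cup\{a\}\vdash a(x).P$; if $\rho\vdash P$ and $b\notin\rho$ then $\rho\cup\{a,b\}\vdash\overline{a}\langle\!\langle b\rangle\!\rangle.P$; if $\rho\vdash P$ then $(\rho\setminus\{b\})\cup\{a\}\vdash a\langle\!\langle b\rangle\!\rangle.P$. *)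

theory Defs
  imports Main
begin

type_synonym name = nat

datatype prefix =
    Out name name      (* output of b on a:  a<b> *)
  | In name name       (* input on a binding x: a(x) *)
  | AOut name name     (* send authorization for b on a *)
  | AIn name name      (* receive authorization for b on a *)

datatype proc =
    Nil
  | Par proc proc
  | Res name proc
  | Auth name proc
  | Pre prefix proc

fun subj :: "prefix \<Rightarrow> name" where
  "subj (Out a b) = a" | "subj (In a x) = a" | "subj (AOut a b) = a" | "subj (AIn a b) = a"

definition auths :: "name list \<Rightarrow> proc \<Rightarrow> proc" where
  "auths as P = foldr Auth as P"

primrec fn :: "proc \<Rightarrow> name set" where
  "fn Nil = {}"
| "fn (Par P Q) = fn P \<union> fn Q"
| "fn (Res a P) = fn P - {a}"
| "fn (Auth a P) = insert a (fn P)"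
| "fn (Pre \<alpha> P) = (case \<alpha> of
      Out a b \<Rightarrow> {a, b} \<union> fn P
    | In a x \<Rightarrow> insert a (fn P - {x})
    | AOut a b \<Rightarrow> {a, b} \<union> fn P
    | AIn a b \<Rightarrow> {a, b} \<union> fn P)"

primrec names :: "proc \<Rightarrow> name set" where
  "names Nil = {}"
| "names (Par P Q) = names P \<union> names Q"
| "names (Res a P) = insert a (names P)"
| "names (Auth a P) = insert a (names P)"
| "names (Pre \<alpha> P) = (case \<alpha> of
      Out a b \<Rightarrow> {a, b} \<union> names P
    | In a x \<Rightarrow> {a, x} \<union> names P
    | AOut a b \<Rightarrow> {a, b} \<union> names P
    | AIn a b \<Rightarrow> {a, b} \<union> names P)"

lemma finite_names: "finite (names P)"
  by (induction P) (auto split: prefix.split)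

definition swn :: "name \<Rightarrow> name \<Rightarrow> name \<Rightarrow> name" where
  "swn a b n = (if n = a then b else if n = b then a else n)"

fun swp :: "name \<Rightarrow> name \<Rightarrow> prefix \<Rightarrow> prefix" where
  "swp a b (Out c d) = Out (swn a b c) (swn a b d)"
| "swp a b (In c d) = In (swn a b c) (swn a b d)"
| "swp a b (AOut c d) = AOut (swn a b c) (swn a b d)"
| "swp a b (AIn c d) = AIn (swn a b c) (swn a b d)"

primrec swap :: "name \<Rightarrow> name \<Rightarrow> proc \<Rightarrow> proc" where
  "swap a b Nil = Nil"
| "swap a b (Par P Q) = Par (swap a b P) (swap a b Q)"
| "swap a b (Res c P) = Res (swn a b c) (swap a b P)"
| "swap a b (Auth c P) = Auth (swn a b c) (swap a b P)"
| "swap a b (Pre \<alpha> P) = Pre (swp a b \<alpha>) (swap a b P)"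

primrec psize :: "proc \<Rightarrow> nat" where
  "psize Nil = 0"
| "psize (Par P Q) = Suc (psize P + psize Q)"
| "psize (Res a P) = Suc (psize P)"
| "psize (Auth a P) = Suc (psize P)"
| "psize (Pre \<alpha> P) = Suc (psize P)"

lemma psize_swap[simp]: "psize (swap a b P) = psize P"
  by (induction P) auto

definition fresh :: "name set \<Rightarrow> name" where
  "fresh S = Suc (Max (insert 0 S))"

definition ren :: "name \<Rightarrow> name \<Rightarrow> name \<Rightarrow> name" where
  "ren x c n = (if n = x then c else n)"

text \<open>Capture-avoiding substitution  subst Q x c = Q{c/x}.
  Bound names clashing with c are renamed to a fresh name.\<close>
function subst :: "proc \<Rightarrow> name \<Rightarrow> name \<Rightarrow> proc" where
  "subst Nil x c = Nil"
| "subst (Par P Q) x c = Par (subst P x c) (subst Q x c)"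
| "subst (Res a P) x c =
     (if a = x then Res a P
      else if a = c then
        (let b = fresh (insert x (insert c (names P))) in Res b (subst (swap a b P) x c))
      else Res a (subst P x c))"
| "subst (Auth a P) x c = Auth (ren x c a) (subst P x c)"
| "subst (Pre (Out a b) P) x c = Pre (Out (ren x c a) (ren x c b)) (subst P x c)"
| "subst (Pre (AOut a b) P) x c = Pre (AOut (ren x c a) (ren x c b)) (subst P x c)"
| "subst (Pre (AIn a b) P) x c = Pre (AIn (ren x c a) (ren x c b)) (subst P x c)"
| "subst (Pre (In a y) P) x c =
     (if y = x then Pre (In (ren x c a) y) P
      else if y = c then
        (let b = fresh (insert x (insert c (names P))) in
           Pre (In (ren x c a) b) (subst (swap y b P) x c))
      else Pre (In (ren x c a) y) (subst P x c))"
  by pat_completeness auto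
termination
  by (relation "measure (\<lambda>(P, x, c). psize P)") auto

inductive scong :: "proc \<Rightarrow> proc \<Rightarrow> bool" (infix "\<equiv>\<^sub>s" 50) where
  refl: "P \<equiv>\<^sub>s P"
| sym: "P \<equiv>\<^sub>s Q \<Longrightarrow> Q \<equiv>\<^sub>s P"
| trans: "P \<equiv>\<^sub>s Q \<Longrightarrow> Q \<equiv>\<^sub>s R \<Longrightarrow> P \<equiv>\<^sub>s R"
| cPar: "P \<equiv>\<^sub>s P' \<Longrightarrow> Q \<equiv>\<^sub>s Q' \<Longrightarrow> Par P Q \<equiv>\<^sub>s Par P' Q'"
| cRes: "P \<equiv>\<^sub>s P' \<Longrightarrow> Res a P \<equiv>\<^sub>s Res a P'"
| cAuth: "P \<equiv>\<^sub>s P' \<Longrightarrow> Auth a P \<equiv>\<^sub>s Auth a P'"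
| cPre: "P \<equiv>\<^sub>s P' \<Longrightarrow> Pre \<alpha> P \<equiv>\<^sub>s Pre \<alpha> P'"
| par_nil: "Par P Nil \<equiv>\<^sub>s P"
| par_comm: "Par P Q \<equiv>\<^sub>s Par Q P"
| par_assoc: "Par (Par P Q) R \<equiv>\<^sub>s Par P (Par Q R)"
| res_nil: "Res a Nil \<equiv>\<^sub>s Nil"
| res_comm: "Res a (Res b P) \<equiv>\<^sub>s Res b (Res a P)"
| scope_ext: "a \<notin> fn P \<Longrightarrow> Par P (Res a Q) \<equiv>\<^sub>s Res a (Par P Q)"
| alpha_res: "b \<notin> fn P \<Longrightarrow> Res a P \<equiv>\<^sub>s Res b (swap a b P)"
| alpha_in: "y \<notin> fn P \<Longrightarrow> Pre (In a x) P \<equiv>\<^sub>s Pre (In a y) (swap x y P)"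
| auth_comm: "Auth a (Auth b P) \<equiv>\<^sub>s Auth b (Auth a P)"
| auth_nil: "Auth a Nil \<equiv>\<^sub>s Nil"
| auth_par: "Auth a (Par P Q) \<equiv>\<^sub>s Par (Auth a P) (Auth a Q)"
| auth_res: "a \<noteq> b \<Longrightarrow> Auth a (Res b P) \<equiv>\<^sub>s Res b (Auth a P)"

inductive red :: "proc \<Rightarrow> proc \<Rightarrow> bool" (infix "\<longrightarrow>\<^sub>r" 50) where
  comm: "Par (auths as1 (Auth b (Pre (Out b c) P))) (auths as2 (Auth b (Pre (In b x) Q)))
         \<longrightarrow>\<^sub>r Par (auths as1 (Auth b P)) (auths as2 (Auth b (subst Q x c)))"
| auth: "Par (auths as1 (Auth b (Auth c (Pre (AOut b c) P)))) (auths as2 (Auth b (Pre (AIn b c) Q)))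
         \<longrightarrow>\<^sub>r Par (auths as1 (Auth b P)) (auths as2 (Auth b (Auth c Q)))"
| par: "P \<longrightarrow>\<^sub>r Q \<Longrightarrow> Par P R \<longrightarrow>\<^sub>r Par Q R"
| res: "P \<longrightarrow>\<^sub>r Q \<Longrightarrow> Res a P \<longrightarrow>\<^sub>r Res a Q"
| aut: "P \<longrightarrow>\<^sub>r Q \<Longrightarrow> Auth a P \<longrightarrow>\<^sub>r Auth a Q"
| struct: "P \<equiv>\<^sub>s P' \<Longrightarrow> P' \<longrightarrow>\<^sub>r Q' \<Longrightarrow> Q' \<equiv>\<^sub>s Q \<Longrightarrow> P \<longrightarrow>\<^sub>r Q"

datatype ctx = Hole | CPar proc ctx | CRes name ctx | CAuth name ctx

primrec fill :: "ctx \<Rightarrow> proc \<Rightarrow> proc" where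
  "fill Hole R = R"
| "fill (CPar P C) R = Par P (fill C R)"
| "fill (CRes a C) R = Res a (fill C R)"
| "fill (CAuth a C) R = Auth a (fill C R)"

primrec auth :: "ctx \<Rightarrow> name \<Rightarrow> bool" where
  "auth Hole a = False"
| "auth (CAuth b C) a = (if b = a then True else auth C a)"
| "auth (CPar P C) a = auth C a"
| "auth (CRes b C) a = auth C a"

definition error :: "proc \<Rightarrow> bool" where
  "error P \<longleftrightarrow> (\<exists>C a \<alpha> Q. P \<equiv>\<^sub>s fill C (Pre \<alpha> Q) \<and> subj \<alpha> = a \<and>
      (\<not> auth C a \<or> (\<exists>b. \<alpha> = AOut a b \<and> \<not> auth C b)))"

inductive typed :: "name set \<Rightarrow> proc \<Rightarrow> bool" ("_ \<turnstile> _" [50, 50] 50) where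
  t_nil: "{} \<turnstile> Nil"
| t_par: "\<rho>1 \<turnstile> P \<Longrightarrow> \<rho>2 \<turnstile> Q \<Longrightarrow> \<rho>1 \<union> \<rho>2 \<turnstile> Par P Q"
| t_res: "\<rho> \<turnstile> P \<Longrightarrow> a \<notin> \<rho> \<Longrightarrow> \<rho> \<turnstile> Res a P"
| t_auth: "\<rho> \<turnstile> P \<Longrightarrow> \<rho> - {a} \<turnstile> Auth a P"
| t_out: "\<rho> \<turnstile> P \<Longrightarrow> insert a \<rho> \<turnstile> Pre (Out a b) P"
| t_in: "\<rho> \<turnstile> P \<Longrightarrow> x \<notin> \<rho> \<Longrightarrow> insert a \<rho> \<turnstile> Pre (In a x) P"
| t_aout: "\<rho> \<turnstile> P \<Longrightarrow> b \<notin> \<rho> \<Longrightarrow> \<rho> \<union> {a, b} \<turnstile> Pre (AOut a b) P"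
| t_ain: "\<rho> \<turnstile> P \<Longrightarrow> insert a (\<rho> - {b}) \<turnstile> Pre (AIn a b) P"

end

theory Submission
  imports Defs
begin

definition up :: "name \<Rightarrow> (name \<Rightarrow> nat) \<Rightarrow> (name \<Rightarrow> nat)" where
  "up a r = r(a := max (r a) 1)"

fun tyP :: "prefix \<Rightarrow> (name \<Rightarrow> nat) \<Rightarrow> (name \<Rightarrow> nat) option" where
  "tyP (Out a b) r = Some (up a r)"
| "tyP (In a x) r = (if r x = 0 then Some (up a r) else None)"
| "tyP (AOut a b) r = Some (up a (r(b := Suc (r b))))"
| "tyP (AIn a b) r = Some (up a (r(b := r b - 1)))"

primrec ty :: "proc \<Rightarrow> (name \<Rightarrow> nat) option" where
  "ty Nil = Some (\<lambda>_. 0)"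
| "ty (Par P Q) = (case ty P of None \<Rightarrow> None | Some r \<Rightarrow>
     (case ty Q of None \<Rightarrow> None | Some s \<Rightarrow> Some (\<lambda>n. max (r n) (s n))))"
| "ty (Res a P) = (case ty P of None \<Rightarrow> None | Some r \<Rightarrow> if r a = 0 then Some r else None)"
| "ty (Auth a P) = (case ty P of None \<Rightarrow> None | Some r \<Rightarrow> Some (r(a := r a - 1)))"
| "ty (Pre \<alpha> P) = (case ty P of None \<Rightarrow> None | Some r \<Rightarrow> tyP \<alpha> r)"

lemma swn_swn[simp]: "swn a b (swn a b n) = n"
  by (simp add: swn_def)

lemma swn_eq_iff[simp]: "(swn a b m = swn a b n) = (m = n)"
  by (auto simp: swn_def)

lemma ty_swap: "ty (swap a b P) = map_option (\<lambda>r. r \<circ> swn a b) (ty P)"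
proof (induction P)
  case (Pre \<alpha> P)
  show ?case
  proof (cases "ty P")
    case None then show ?thesis using Pre by simp
  next
    case (Some r)
    then show ?thesis using Pre
      by (cases \<alpha>) (auto simp: up_def fun_eq_iff swn_def)
  qed
qed (auto simp: fun_eq_iff split: option.split)

lemma ty_supp: "ty P = Some r \<Longrightarrow> r n \<noteq> 0 \<Longrightarrow> n \<in> fn P"
proof (induction P arbitrary: r)
  case (Pre \<alpha> P)
  then show ?case
    by (cases \<alpha>) (auto simp: up_def split: option.splits if_splits)
qed (auto simp: max_def split: option.splits if_splits)

lemma fn_names: "n \<in> fn P \<Longrightarrow> n \<in> names P"
  by (induction P) (auto split: prefix.splits)

lemma fresh_notin: "finite S \<Longrightarrow> fresh S \<notin> S"
proof
  assume "finite S" "fresh S \<in> S"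
  then have "fresh S \<le> Max (insert 0 S)" by (intro Max_ge) auto
  then show False by (simp add: fresh_def)
qed

lemma swap_fresh_eq: "r a = 0 \<Longrightarrow> r b = 0 \<Longrightarrow> r \<circ> swn a b = r"
  by (auto simp: fun_eq_iff swn_def)

lemma ty_scong: "P \<equiv>\<^sub>s Q \<Longrightarrow> ty P = ty Q"
proof (induction rule: scong.induct)
  case (cPre P P' \<alpha>)
  then show ?case by simp
next
  case (scope_ext a P Q)
  then show ?case using ty_supp[of P _ a]
    by (auto simp: max_def split: option.splits if_splits)
next
  case (alpha_res b P a)
  show ?case
  proof (cases "ty P")
    case (Some r)
    have "r b = 0" using ty_supp[OF Some, of b] alpha_res by auto
    then show ?thesis using Some by (auto simp: ty_swap swn_def fun_eq_iff)
  qed (simp add: ty_swap)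
next
  case (alpha_in y P a x)
  show ?case
  proof (cases "ty P")
    case (Some r)
    have "r y = 0" using ty_supp[OF Some, of y] alpha_in by auto
    then show ?thesis using Some by (auto simp: ty_swap swn_def fun_eq_iff up_def)
  qed (simp add: ty_swap)
next
  case (auth_comm a b P)
  then show ?case by (cases "a = b") (auto split: option.splits simp: fun_upd_twist)
next
  case (auth_res a b P)
  then show ?case by (auto split: option.splits)
next
  case (res_comm a b P)
  then show ?case by (auto split: option.splits)
next
  case (auth_par a P Q)
  show ?case
    by (cases "ty P"; cases "ty Q") (auto simp: fun_eq_iff max_def)
qed (auto split: option.splits simp: fun_eq_iff max_def)

definition sm :: "name \<Rightarrow> name \<Rightarrow> (name \<Rightarrow> nat) \<Rightarrow> (name \<Rightarrow> nat)" where
  "sm x c r = (\<lambda>n. (if n = c then r x else 0) + (if n = x then 0 else r n))"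

lemma sm_mono: "r \<le> s \<Longrightarrow> sm x c r \<le> sm x c s"
  by (auto simp: le_fun_def sm_def add_mono)

lemma le_sm: "r x = 0 \<or> x = c \<Longrightarrow> r \<le> sm x c r"
  by (auto simp: le_fun_def sm_def)

lemma sm_max: "(\<lambda>n. max (r' n) (s' n)) \<le> sm x c (\<lambda>n. max (r n) (s n))"
  if "r' \<le> sm x c r" "s' \<le> sm x c s"
proof (rule le_funI)
  fix n
  show "max (r' n) (s' n) \<le> sm x c (\<lambda>n. max (r n) (s n)) n"
    using le_funD[OF that(1), of n] le_funD[OF that(2), of n] by (auto simp: sm_def)
qed

lemma sm_auth: assumes "r' \<le> sm x c r" shows "r'(ren x c a := r' (ren x c a) - Suc 0) \<le> sm x c (r(a := r a - Suc 0))"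
proof (rule le_funI)
  fix n
  show "(r'(ren x c a := r' (ren x c a) - Suc 0)) n \<le> sm x c (r(a := r a - Suc 0)) n"
    using le_funD[OF assms, of n] by (auto simp: sm_def ren_def)
qed

lemma up_mono: "r \<le> s \<Longrightarrow> up a r \<le> up a s"
  unfolding le_fun_def up_def by (metis fun_upd_apply max.mono order_refl)

lemma sm_up: "r' \<le> sm x c r \<Longrightarrow> up (ren x c a) r' \<le> sm x c (up a r)"
  by (auto simp: le_fun_def sm_def ren_def up_def max_def split: if_splits)

lemma sm_suc: "r' \<le> sm x c r \<Longrightarrow> r'(ren x c a := Suc (r' (ren x c a))) \<le> sm x c (r(a := Suc (r a)))"
  by (auto simp: le_fun_def sm_def ren_def split: if_splits)

lemma fresh_names: "b = fresh (insert x (insert c (names P))) \<Longrightarrow> b \<noteq> x \<and> b \<noteq> c \<and> b \<notin> names P"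
  using fresh_notin[of "insert x (insert c (names P))"] finite_names[of P] by auto

lemma ty_subst: "ty Q = Some r \<Longrightarrow> \<exists>r'. ty (subst Q x c) = Some r' \<and> r' \<le> sm x c r"
proof (induction Q x c arbitrary: r rule: subst.induct)
  case (1 x c)
  then show ?case by (auto simp: le_fun_def sm_def)
next
  case (2 P Q x c)
  then show ?case by (auto split: option.splits intro!: sm_max)
next
  case (3 a P x c)
  from "3.prems" obtain rp where rp: "ty P = Some rp" "rp a = 0" "r = rp"
    by (auto split: option.splits if_splits)
  show ?case
  proof (cases "a = x")
    case True
    then show ?thesis using 3 rp le_sm[of rp x c] by auto
  next
    case ax: False
    show ?thesis
    proof (cases "a = c")
      case True
      define b where "b = fresh (insert x (insert c (names P)))"
      have b: "b \<noteq> x" "b \<noteq> c" "b \<notin> names P" using fresh_names[OF b_def] by auto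
      have rb: "rp b = 0" using ty_supp[OF rp(1), of b] fn_names[of b P] b by auto
      have ts: "ty (swap a b P) = Some (rp \<circ> swn a b)" using rp ty_swap by simp
      obtain r' where r': "ty (subst (swap a b P) x c) = Some r'" "r' \<le> sm x c (rp \<circ> swn a b)"
        using "3.IH"(1)[OF ax True b_def ts] by blast
      have "r' b = 0" using le_funD[OF r'(2), of b] b rp(2) rb by (cases "b = a"; cases "b = y"; simp add: sm_def swn_def)
      moreover have "r' \<le> sm x c rp"
      proof (rule le_funI)
        fix n
        show "r' n \<le> sm x c rp n" using le_funD[OF r'(2), of n] b rp(2) rb ax True
          by (auto simp: sm_def swn_def split: if_splits)
      qed
      ultimately show ?thesis using r' ax True rp by (simp add: b_def Let_def)
    next
      case False
      obtain r' where r': "ty (subst P x c) = Some r'" "r' \<le> sm x c rp"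
        using "3.IH"(2)[OF ax False rp(1)] by blast
      have "r' a = 0" using le_funD[OF r'(2), of a] rp(2) ax False by (auto simp: sm_def)
      then show ?thesis using r' ax False rp by simp
    qed
  qed
next
  case (4 x c a P)
  then show ?case by (auto split: option.splits intro!: sm_auth)
next
  case (5 x c a b P)
  then show ?case by (auto split: option.splits intro!: sm_up)
next
  case (6 x c a b P)
  then show ?case by (auto split: option.splits intro!: sm_up sm_suc)
next
  case (7 x c a b P)
  then show ?case by (auto split: option.splits intro!: sm_up sm_auth)
next
  case (8 a y P x c)
  from "8.prems" obtain rp where rp: "ty P = Some rp" "rp y = 0" "r = up a rp"
    by (auto split: option.splits if_splits)
  show ?case
  proof (cases "y = x")
    case True
    then show ?thesis using rp le_sm[of rp x c] sm_up by auto
  next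
    case ax: False
    show ?thesis
    proof (cases "y = c")
      case True
      define b where "b = fresh (insert x (insert c (names P)))"
      have b: "b \<noteq> x" "b \<noteq> c" "b \<notin> names P" using fresh_names[OF b_def] by auto
      have rb: "rp b = 0" using ty_supp[OF rp(1), of b] fn_names[of b P] b by auto
      have ts: "ty (swap y b P) = Some (rp \<circ> swn y b)" using rp ty_swap by simp
      obtain r' where r': "ty (subst (swap y b P) x c) = Some r'" "r' \<le> sm x c (rp \<circ> swn y b)"
        using "8.IH"(1)[OF ax True b_def ts] by blast
      have "r' b = 0" using le_funD[OF r'(2), of b] b rp(2) rb by (cases "b = a"; cases "b = y"; simp add: sm_def swn_def)
      moreover have "r' \<le> sm x c rp"
      proof (rule le_funI)
        fix n
        show "r' n \<le> sm x c rp n" using le_funD[OF r'(2), of n] b rp(2) rb ax True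
          by (auto simp: sm_def swn_def split: if_splits)
      qed
      ultimately show ?thesis using r' ax True rp sm_up by (simp add: b_def Let_def)
    next
      case False
      obtain r' where r': "ty (subst P x c) = Some r'" "r' \<le> sm x c rp"
        using "8.IH"(2)[OF ax False rp(1)] by blast
      have "r' y = 0" using le_funD[OF r'(2), of y] rp(2) ax False by (auto simp: sm_def)
      then show ?thesis using r' ax False rp sm_up by simp
    qed
  qed
qed

definition dec :: "name \<Rightarrow> (name \<Rightarrow> nat) \<Rightarrow> (name \<Rightarrow> nat)" where
  "dec a r = r(a := r a - Suc 0)"

lemma ty_Auth: "ty (Auth a P) = map_option (dec a) (ty P)"
  by (auto simp: dec_def split: option.splits)

declare ty.simps(4)[simp del] ty_Auth[simp]

lemma le_up: "r \<le> up a r"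
  by (auto simp: le_fun_def up_def)

lemma dec_mono: "r \<le> s \<Longrightarrow> dec a r \<le> dec a s"
  by (auto simp: le_fun_def dec_def diff_le_mono)

lemma ty_auths: "ty (auths as X) = map_option (foldr dec as) (ty X)"
proof (induction as)
  case Nil
  then show ?case by (simp add: auths_def option.map_ident)
next
  case (Cons a as)
  have "auths (a # as) X = Auth a (auths as X)" by (simp add: auths_def)
  then show ?case using Cons by (simp add: option.map_comp o_def)
qed

lemma foldr_dec_mono: "r \<le> s \<Longrightarrow> foldr dec as r \<le> foldr dec as s"
  by (induction as) (auto intro: dec_mono)

lemma max_mono_fun: fixes r r' s s' :: "name \<Rightarrow> nat" assumes "r' \<le> r" "s' \<le> s" shows "(\<lambda>n. max (r' n) (s' n)) \<le> (\<lambda>n. max (r n) (s n))"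
proof (rule le_funI)
  fix n
  show "max (r' n) (s' n) \<le> max (r n) (s n)" using le_funD[OF assms(1), of n] le_funD[OF assms(2), of n]
    by (metis max.bounded_iff le_max_iff_disj)
qed

lemma sm_id: "r x = 0 \<Longrightarrow> sm x c r = r"
  by (auto simp: sm_def fun_eq_iff)

lemma par_step:
  assumes "ty (auths as1 X1) = Some t1" "ty (auths as2 X2) = Some t2"
    and "\<And>s1. ty X1 = Some s1 \<Longrightarrow> \<exists>s1'. ty Y1 = Some s1' \<and> s1' \<le> s1"
    and "\<And>s2. ty X2 = Some s2 \<Longrightarrow> \<exists>s2'. ty Y2 = Some s2' \<and> s2' \<le> s2"
  shows "\<exists>r'. ty (Par (auths as1 Y1) (auths as2 Y2)) = Some r' \<and> r' \<le> (\<lambda>n. max (t1 n) (t2 n))"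
proof -
  obtain s1 where s1: "ty X1 = Some s1" "t1 = foldr dec as1 s1" using assms(1) by (auto simp: ty_auths)
  obtain s2 where s2: "ty X2 = Some s2" "t2 = foldr dec as2 s2" using assms(2) by (auto simp: ty_auths)
  obtain s1' where s1': "ty Y1 = Some s1'" "s1' \<le> s1" using assms(3)[OF s1(1)] by blast
  obtain s2' where s2': "ty Y2 = Some s2'" "s2' \<le> s2" using assms(4)[OF s2(1)] by blast
  show ?thesis using s1 s2 s1' s2'
    by (auto simp: ty_auths intro!: max_mono_fun foldr_dec_mono)
qed

lemma ty_red: "P \<longrightarrow>\<^sub>r Q \<Longrightarrow> ty P = Some r \<Longrightarrow> \<exists>r'. ty Q = Some r' \<and> r' \<le> r"
proof (induction arbitrary: r rule: red.induct)
  case (comm as1 b c P as2 x Q)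
  from comm obtain t1 t2 where t: "ty (auths as1 (Auth b (Pre (Out b c) P))) = Some t1"
     "ty (auths as2 (Auth b (Pre (In b x) Q))) = Some t2" "r = (\<lambda>n. max (t1 n) (t2 n))"
    by (auto split: option.splits)
  show ?case unfolding t(3)
  proof (rule par_step[OF t(1,2)])
    fix s1 assume "ty (Auth b (Pre (Out b c) P)) = Some s1"
    then obtain rp where "ty P = Some rp" "s1 = dec b (up b rp)"
      by (auto split: option.splits)
    then show "\<exists>s1'. ty (Auth b P) = Some s1' \<and> s1' \<le> s1"
      by (auto intro!: dec_mono le_up)
  next
    fix s2 assume a: "ty (Auth b (Pre (In b x) Q)) = Some s2"
    then obtain rq where rq: "ty Q = Some rq" "rq x = 0" "s2 = dec b (up b rq)"
      by (auto simp: ty_Auth split: option.splits if_splits)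
    obtain r' where r': "ty (subst Q x c) = Some r'" "r' \<le> sm x c rq" using ty_subst[OF rq(1)] by blast
    have "dec b r' \<le> dec b (up b rq)"
      using r'(2) rq(2) by (intro dec_mono order_trans[OF _ le_up]) (simp add: sm_id)
    then show "\<exists>s2'. ty (Auth b (subst Q x c)) = Some s2' \<and> s2' \<le> s2"
      using rq r' by auto
  qed
next
  case (auth as1 b c P as2 Q)
  from auth obtain t1 t2 where t: "ty (auths as1 (Auth b (Auth c (Pre (AOut b c) P)))) = Some t1"
     "ty (auths as2 (Auth b (Pre (AIn b c) Q))) = Some t2" "r = (\<lambda>n. max (t1 n) (t2 n))"
    by (auto split: option.splits)
  show ?case unfolding t(3)
  proof (rule par_step[OF t(1,2)])
    fix s1 assume "ty (Auth b (Auth c (Pre (AOut b c) P))) = Some s1"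
    then show "\<exists>s1'. ty (Auth b P) = Some s1' \<and> s1' \<le> s1"
      by (auto simp: ty_Auth up_def dec_def le_fun_def split: option.splits)
  next
    fix s2 assume a: "ty (Auth b (Pre (AIn b c) Q)) = Some s2"
    then show "\<exists>s2'. ty (Auth b (Auth c Q)) = Some s2' \<and> s2' \<le> s2"
      by (auto simp: ty_Auth up_def dec_def le_fun_def split: option.splits)
  qed
next
  case (par P Q R)
  then show ?case by (auto split: option.splits intro!: max_mono_fun)
next
  case (res P Q a)
  from res.prems obtain rp where rp: "ty P = Some rp" "rp a = 0" "r = rp"
    by (auto split: option.splits if_splits)
  then obtain r' where r': "ty Q = Some r'" "r' \<le> rp" using res.IH by blast
  have "r' a = 0" using le_funD[OF r'(2), of a] rp by simp
  then show ?case using r' rp by simp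
next
  case (aut P Q a)
  then show ?case by (auto simp: ty_Auth intro!: dec_mono)
next
  case (struct P P' Q' Q)
  then show ?case using ty_scong by metis
qed

lemma typed_ty: "\<rho> \<turnstile> P \<Longrightarrow> ty P = Some (\<lambda>n. if n \<in> \<rho> then 1 else 0)"
proof (induction rule: typed.induct)
  case (t_par \<rho>1 P \<rho>2 Q)
  then show ?case by (auto simp: fun_eq_iff)
qed (auto simp: fun_eq_iff up_def dec_def)

lemma fill_ty: "ty (fill C X) = Some \<rho> \<Longrightarrow> \<exists>\<sigma>. ty X = Some \<sigma> \<and> (\<forall>n. \<not> auth C n \<longrightarrow> \<sigma> n \<le> \<rho> n)"
proof (induction C arbitrary: \<rho>)
  case (CPar P C)
  then show ?case by (fastforce split: option.splits)
next
  case (CRes a C)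
  then show ?case by (auto split: option.splits if_splits)
next
  case (CAuth a C)
  then show ?case by (fastforce simp: dec_def)
qed simp

lemma pre_ty: "ty (Pre \<alpha> R) = Some \<sigma> \<Longrightarrow> \<sigma> (subj \<alpha>) \<ge> 1 \<and> (\<forall>a b. \<alpha> = AOut a b \<longrightarrow> \<sigma> b \<ge> 1)"
  by (cases \<alpha>) (auto simp: up_def split: option.splits if_splits)

theorem mainTheorem8:
  assumes "{} \<turnstile> P" and "red\<^sup>*\<^sup>* P Q"
  shows "\<not> error Q"
proof
  have t0: "ty P = Some (\<lambda>_. 0)" using typed_ty[OF assms(1)] by simp
  have "\<exists>r. ty Q = Some r \<and> r \<le> (\<lambda>_. 0)" using assms(2)
  proof (induction rule: rtranclp_induct)
    case base
    then show ?case using t0 by simp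
  next
    case (step y z)
    then obtain r where "ty y = Some r" "r \<le> (\<lambda>_. 0)" by blast
    then show ?case using ty_red[OF step(2)] by (meson order_trans)
  qed
  then have tq: "ty Q = Some (\<lambda>_. 0)" by (auto simp: le_fun_def fun_eq_iff)
  assume "error Q"
  then obtain C a \<alpha> R where e: "Q \<equiv>\<^sub>s fill C (Pre \<alpha> R)" "subj \<alpha> = a"
      "\<not> auth C a \<or> (\<exists>b. \<alpha> = AOut a b \<and> \<not> auth C b)"
    unfolding error_def by blast
  have "ty (fill C (Pre \<alpha> R)) = Some (\<lambda>_. 0)" using ty_scong[OF e(1)] tq by simp
  then obtain \<sigma> where s: "ty (Pre \<alpha> R) = Some \<sigma>" "\<forall>n. \<not> auth C n \<longrightarrow> \<sigma> n \<le> 0"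
    using fill_ty by fastforce
  show False using pre_ty[OF s(1)] s(2) e(2,3) by fastforce
qed

end
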